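(* Let $C\in\mathscr{C}$ and let $k_C\colon K_C\to C$ be obtained as follows: choose a distinguished triangle $S[-1]\to C\overset{a}{\to}T\to S$ with $S\in\mathcal{S},T\in\mathcal{T}$; choose a distinguished triangle $U\to T\overset{b}{\to}V[1]\to U[1]$ with $U\in\mathcal{U},V\in\mathcal{V}$; and choose a distinguished triangle $V\to K_C\overset{k_C}{\to}C\overset{b\circ a}{\to}V[1]$. Then for every $X\in\mathscr{C}^-$, the map \[ \underline{k}_C\circ-\colon\underline{\mathscr{C}}^-(X,K_C)\to\underline{\mathscr{C}}(X,C) \] is bijective.
   Context: $\mathscr{C}$ is a triangulated category with shift $[1]$; subcategories are full, additive, closed under isomorphisms and direct summands. $\mathrm{Ext}^1(X,Y)=\mathscr{C}(X,Y[1])$. $\mathcal{M}\ast\mathcal{N}$ is the full subcategory of objects $C$ admitting a distinguished triangle $M\to C\to N\to M[1]$ with $M\in\mathcal{M}$, $N\in\mathcal{N}$. A cotorsion pair $(\mathcal{U},\mathcal{V})$: $\mathrm{Ext}^1(\mathcal{U},\mathcal{V})=0$ and $\mathscr{C}=\mathcal{U}\ast\mathcal{V}[1]$. Fix a twin cotorsion pair, i.e. cotorsion pairs $(\mathcal{S},\mathcal{T}),(\mathcal{U},\mathcal{V})$ with $\mathrm{Ext}^1(\mathcal{S},\mathcal{V})=0$. Put $\mathcal{W}=\mathcal{T}\cap\mathcal{U}$, $\mathscr{C}^-=\mathcal{S}[-1]\ast\mathcal{W}$. $\underline{\mathscr{C}}$ and $\underline{\mathscr{C}}^-$ denote the ideal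 quotients of $\mathscr{C}$ and $\mathscr{C}^-$ by morphisms factoring through objects of $\mathcal{W}$, and $\underline{f}$ is the image of a morphism $f$. (One has $K_C\in\mathscr{C}^-$.) *)

theory Defs
  imports Main
begin

text \<open>Objects are all elements of
the type 'o; morphisms are elements of 'm, with hom-sets Hom X Y.  The shift [1]
is given on objects by shO (assumed bijective, so [-1] is its inverse) and on
morphisms by shM.  dist X Y Z f g h means X -f-> Y -g-> Z -h-> X[1] is distinguished.\<close>

record ('o, 'm) tricat =
  Hom   :: "'o \<Rightarrow> 'o \<Rightarrow> 'm set"
  cmp   :: "'m \<Rightarrow> 'm \<Rightarrow> 'm"   (* cmp g f = g o f *)
  idm   :: "'o \<Rightarrow> 'm"
  addm  :: "'m \<Rightarrow> 'm \<Rightarrow> 'm"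
  negm  :: "'m \<Rightarrow> 'm"
  zerom :: "'o \<Rightarrow> 'o \<Rightarrow> 'm"
  shO   :: "'o \<Rightarrow> 'o"
  shM   :: "'m \<Rightarrow> 'm"
  dist  :: "'o \<Rightarrow> 'o \<Rightarrow> 'o \<Rightarrow> 'm \<Rightarrow> 'm \<Rightarrow> 'm \<Rightarrow> bool"

definition category_axioms :: "('o, 'm, 'x) tricat_scheme \<Rightarrow> bool" where
  "category_axioms C \<longleftrightarrow>
     (\<forall>X Y Z f g. f \<in> Hom C X Y \<longrightarrow> g \<in> Hom C Y Z \<longrightarrow> cmp C g f \<in> Hom C X Z) \<and>
     (\<forall>X. idm C X \<in> Hom C X X) \<and>
     (\<forall>X Y f. f \<in> Hom C X Y \<longrightarrow> cmp C f (idm C X) = f \<and> cmp C (idm C Y) f = f) \<and>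
     (\<forall>W X Y Z f g h. f \<in> Hom C W X \<longrightarrow> g \<in> Hom C X Y \<longrightarrow> h \<in> Hom C Y Z \<longrightarrow>
        cmp C h (cmp C g f) = cmp C (cmp C h g) f)"

definition preadditive :: "('o, 'm, 'x) tricat_scheme \<Rightarrow> bool" where
  "preadditive C \<longleftrightarrow> category_axioms C \<and>
     (\<forall>X Y. zerom C X Y \<in> Hom C X Y \<and>
        (\<forall>f \<in> Hom C X Y. \<forall>g \<in> Hom C X Y. addm C f g \<in> Hom C X Y) \<and>
        (\<forall>f \<in> Hom C X Y. negm C f \<in> Hom C X Y) \<and>
        (\<forall>f \<in> Hom C X Y. \<forall>g \<in> Hom C X Y. \<forall>h \<in> Hom C X Y.
            addm C (addm C f g) h = addm C f (addm C g h)) \<and>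
        (\<forall>f \<in> Hom C X Y. \<forall>g \<in> Hom C X Y. addm C f g = addm C g f) \<and>
        (\<forall>f \<in> Hom C X Y. addm C (zerom C X Y) f = f) \<and>
        (\<forall>f \<in> Hom C X Y. addm C (negm C f) f = zerom C X Y)) \<and>
     (\<forall>X Y Z f g g'. f \<in> Hom C X Y \<longrightarrow> g \<in> Hom C Y Z \<longrightarrow> g' \<in> Hom C Y Z \<longrightarrow>
        cmp C (addm C g g') f = addm C (cmp C g f) (cmp C g' f)) \<and>
     (\<forall>X Y Z f f' g. f \<in> Hom C X Y \<longrightarrow> f' \<in> Hom C X Y \<longrightarrow> g \<in> Hom C Y Z \<longrightarrow>
        cmp C g (addm C f f') = addm C (cmp C g f) (cmp C g f'))"

definition zero_obj :: "('o, 'm, 'x) tricat_scheme \<Rightarrow> 'o \<Rightarrow> bool" where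
  "zero_obj C Z \<longleftrightarrow> (\<forall>X. Hom C Z X = {zerom C Z X} \<and> Hom C X Z = {zerom C X Z})"

definition biprod :: "('o, 'm, 'x) tricat_scheme \<Rightarrow> 'o \<Rightarrow> 'o \<Rightarrow> 'o \<Rightarrow> 'm \<Rightarrow> 'm \<Rightarrow> 'm \<Rightarrow> 'm \<Rightarrow> bool" where
  "biprod C X1 X2 Y i1 i2 p1 p2 \<longleftrightarrow>
     i1 \<in> Hom C X1 Y \<and> i2 \<in> Hom C X2 Y \<and> p1 \<in> Hom C Y X1 \<and> p2 \<in> Hom C Y X2 \<and>
     cmp C p1 i1 = idm C X1 \<and> cmp C p2 i2 = idm C X2 \<and>
     cmp C p1 i2 = zerom C X2 X1 \<and> cmp C p2 i1 = zerom C X1 X2 \<and>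
     addm C (cmp C i1 p1) (cmp C i2 p2) = idm C Y"

definition additive :: "('o, 'm, 'x) tricat_scheme \<Rightarrow> bool" where
  "additive C \<longleftrightarrow> preadditive C \<and> (\<exists>Z. zero_obj C Z) \<and>
     (\<forall>X1 X2. \<exists>Y i1 i2 p1 p2. biprod C X1 X2 Y i1 i2 p1 p2)"

definition iso :: "('o, 'm, 'x) tricat_scheme \<Rightarrow> 'm \<Rightarrow> 'o \<Rightarrow> 'o \<Rightarrow> bool" where
  "iso C f X Y \<longleftrightarrow> f \<in> Hom C X Y \<and>
     (\<exists>g \<in> Hom C Y X. cmp C g f = idm C X \<and> cmp C f g = idm C Y)"

definition shift_axioms :: "('o, 'm, 'x) tricat_scheme \<Rightarrow> bool" where
  "shift_axioms C \<longleftrightarrow> bij (shO C) \<and>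
     (\<forall>X Y. bij_betw (shM C) (Hom C X Y) (Hom C (shO C X) (shO C Y))) \<and>
     (\<forall>X Y Z f g. f \<in> Hom C X Y \<longrightarrow> g \<in> Hom C Y Z \<longrightarrow>
        shM C (cmp C g f) = cmp C (shM C g) (shM C f)) \<and>
     (\<forall>X. shM C (idm C X) = idm C (shO C X)) \<and>
     (\<forall>X Y f g. f \<in> Hom C X Y \<longrightarrow> g \<in> Hom C X Y \<longrightarrow>
        shM C (addm C f g) = addm C (shM C f) (shM C g))"

definition triangle_axioms :: "('o, 'm, 'x) tricat_scheme \<Rightarrow> bool" where
  "triangle_axioms C \<longleftrightarrow>
     (\<forall>X Y Z f g h. dist C X Y Z f g h \<longrightarrow>
        f \<in> Hom C X Y \<and> g \<in> Hom C Y Z \<and> h \<in> Hom C Z (shO C X)) \<and>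
     \<comment> \<open>TR1: closure under isomorphisms of triangles\<close>
     (\<forall>X Y Z f g h X' Y' Z' f' g' h' u v w.
        dist C X Y Z f g h \<longrightarrow>
        f' \<in> Hom C X' Y' \<longrightarrow> g' \<in> Hom C Y' Z' \<longrightarrow> h' \<in> Hom C Z' (shO C X') \<longrightarrow>
        iso C u X X' \<longrightarrow> iso C v Y Y' \<longrightarrow> iso C w Z Z' \<longrightarrow>
        cmp C f' u = cmp C v f \<longrightarrow> cmp C g' v = cmp C w g \<longrightarrow>
        cmp C h' w = cmp C (shM C u) h \<longrightarrow>
        dist C X' Y' Z' f' g' h') \<and>
     \<comment> \<open>TR1: trivial triangles\<close>
     (\<forall>X. \<exists>Z. zero_obj C Z \<and> dist C X X Z (idm C X) (zerom C X Z) (zerom C Z (shO C X))) \<and>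
     \<comment> \<open>TR1: every morphism has a cone\<close>
     (\<forall>X Y f. f \<in> Hom C X Y \<longrightarrow> (\<exists>Z g h. dist C X Y Z f g h)) \<and>
     \<comment> \<open>TR2: rotation\<close>
     (\<forall>X Y Z f g h. dist C X Y Z f g h \<longleftrightarrow>
        dist C Y Z (shO C X) g h (negm C (shM C f))) \<and>
     \<comment> \<open>TR3: morphism completion\<close>
     (\<forall>X Y Z f g h X' Y' Z' f' g' h' u v.
        dist C X Y Z f g h \<longrightarrow> dist C X' Y' Z' f' g' h' \<longrightarrow>
        u \<in> Hom C X X' \<longrightarrow> v \<in> Hom C Y Y' \<longrightarrow> cmp C f' u = cmp C v f \<longrightarrow>
        (\<exists>w \<in> Hom C Z Z'. cmp C g' v = cmp C w g \<and> cmp C h' w = cmp C (shM C u) h)) \<and>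
     \<comment> \<open>TR4: octahedral axiom\<close>
     (\<forall>X Y Z Z' X' Y' f g h j k l m n.
        f \<in> Hom C X Y \<longrightarrow> g \<in> Hom C Y Z \<longrightarrow>
        dist C X Y Z' f h j \<longrightarrow> dist C Y Z X' g k l \<longrightarrow> dist C X Z Y' (cmp C g f) m n \<longrightarrow>
        (\<exists>a \<in> Hom C Z' Y'. \<exists>b \<in> Hom C Y' X'.
           dist C Z' Y' X' a b (cmp C (shM C h) l) \<and>
           cmp C a h = cmp C m g \<and> cmp C n a = j \<and>
           cmp C b m = k \<and> cmp C l b = cmp C (shM C f) n))"

definition triangulated :: "('o, 'm, 'x) tricat_scheme \<Rightarrow> bool" where
  "triangulated C \<longleftrightarrow> additive C \<and> shift_axioms C \<and> triangle_axioms C"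

definition shO_inv :: "('o, 'm, 'x) tricat_scheme \<Rightarrow> 'o \<Rightarrow> 'o" where
  "shO_inv C = inv (shO C)"

definition subcat :: "('o, 'm, 'x) tricat_scheme \<Rightarrow> 'o set \<Rightarrow> bool" where
  "subcat C D \<longleftrightarrow>
     (\<forall>X Y f. X \<in> D \<longrightarrow> iso C f X Y \<longrightarrow> Y \<in> D) \<and>
     (\<exists>Z. zero_obj C Z \<and> Z \<in> D) \<and>
     (\<forall>X1 X2 Y i1 i2 p1 p2. biprod C X1 X2 Y i1 i2 p1 p2 \<longrightarrow> X1 \<in> D \<longrightarrow> X2 \<in> D \<longrightarrow> Y \<in> D) \<and>
     (\<forall>X1 X2 Y i1 i2 p1 p2. biprod C X1 X2 Y i1 i2 p1 p2 \<longrightarrow> Y \<in> D \<longrightarrow> X1 \<in> D)"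

definition star :: "('o, 'm, 'x) tricat_scheme \<Rightarrow> 'o set \<Rightarrow> 'o set \<Rightarrow> 'o set" where
  "star C M N = {X. \<exists>A B f g h. A \<in> M \<and> B \<in> N \<and> dist C A X B f g h}"

definition ext1_vanish :: "('o, 'm, 'x) tricat_scheme \<Rightarrow> 'o set \<Rightarrow> 'o set \<Rightarrow> bool" where
  "ext1_vanish C A B \<longleftrightarrow> (\<forall>X \<in> A. \<forall>Y \<in> B. Hom C X (shO C Y) = {zerom C X (shO C Y)})"

definition cotorsion_pair :: "('o, 'm, 'x) tricat_scheme \<Rightarrow> 'o set \<Rightarrow> 'o set \<Rightarrow> bool" where
  "cotorsion_pair C U V \<longleftrightarrow> subcat C U \<and> subcat C V \<and> ext1_vanish C U V \<and>
     star C U (shO C ` V) = UNIV"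

definition twin_cotorsion_pair ::
  "('o, 'm, 'x) tricat_scheme \<Rightarrow> 'o set \<Rightarrow> 'o set \<Rightarrow> 'o set \<Rightarrow> 'o set \<Rightarrow> bool" where
  "twin_cotorsion_pair C S T U V \<longleftrightarrow>
     cotorsion_pair C S T \<and> cotorsion_pair C U V \<and> ext1_vanish C S V"

definition Cminus :: "('o, 'm, 'x) tricat_scheme \<Rightarrow> 'o set \<Rightarrow> 'o set \<Rightarrow> 'o set \<Rightarrow> 'o set" where
  "Cminus C S T U = star C (shO_inv C ` S) (T \<inter> U)"

definition factors_through :: "('o, 'm, 'x) tricat_scheme \<Rightarrow> 'o set \<Rightarrow> 'o \<Rightarrow> 'o \<Rightarrow> 'm \<Rightarrow> bool" where
  "factors_through C W X Y f \<longleftrightarrow>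
     (\<exists>Z \<in> W. \<exists>u \<in> Hom C X Z. \<exists>v \<in> Hom C Z Y. f = cmp C v u)"

definition stable_rel :: "('o, 'm, 'x) tricat_scheme \<Rightarrow> 'o set \<Rightarrow> 'o \<Rightarrow> 'o \<Rightarrow> ('m \<times> 'm) set" where
  "stable_rel C W X Y = {(f, g). f \<in> Hom C X Y \<and> g \<in> Hom C X Y \<and>
                                 factors_through C W X Y (addm C f (negm C g))}"

definition quot_hom :: "('o, 'm, 'x) tricat_scheme \<Rightarrow> 'o set \<Rightarrow> 'o \<Rightarrow> 'o \<Rightarrow> 'm set set" where
  "quot_hom C W X Y = Hom C X Y // stable_rel C W X Y"

definition postcomp_class ::
  "('o, 'm, 'x) tricat_scheme \<Rightarrow> 'o set \<Rightarrow> 'o \<Rightarrow> 'o \<Rightarrow> 'm \<Rightarrow> 'm set \<Rightarrow> 'm set" where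
  "postcomp_class C W X Y k cl = stable_rel C W X Y `` (cmp C k ` cl)"

end

theory Submission
  imports Defs
begin



context fixes C :: "('o,'m,'x) tricat_scheme" assumes P: "preadditive C"
begin

lemmas PA = P[unfolded preadditive_def category_axioms_def]
lemmas CA = conjunct1[OF PA]
lemmas BB = conjunct1[OF conjunct2[OF PA]]
lemmas DL = conjunct1[OF conjunct2[OF conjunct2[OF PA]]]
lemmas DR = conjunct2[OF conjunct2[OF conjunct2[OF PA]]]
lemmas CA1 = conjunct1[OF CA]
lemmas CA2 = conjunct1[OF conjunct2[OF CA]]
lemmas CA3 = conjunct1[OF conjunct2[OF conjunct2[OF CA]]]
lemmas CA4 = conjunct2[OF conjunct2[OF conjunct2[OF CA]]]

lemma cmpH: "f \<in> Hom C X Y \<Longrightarrow> g \<in> Hom C Y Z \<Longrightarrow> cmp C g f \<in> Hom C X Z"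
  using CA1 by blast
lemma idH: "idm C X \<in> Hom C X X"
  using CA2 by blast
lemma idl: "f \<in> Hom C X Y \<Longrightarrow> cmp C (idm C Y) f = f"
  using CA3 by blast
lemma idr: "f \<in> Hom C X Y \<Longrightarrow> cmp C f (idm C X) = f"
  using CA3 by blast
lemma assoc: "f \<in> Hom C W X \<Longrightarrow> g \<in> Hom C X Y \<Longrightarrow> h \<in> Hom C Y Z \<Longrightarrow>
        cmp C h (cmp C g f) = cmp C (cmp C h g) f"
  using CA4 by blast
lemma BXY: "zerom C X Y \<in> Hom C X Y \<and>
        (\<forall>f \<in> Hom C X Y. \<forall>g \<in> Hom C X Y. addm C f g \<in> Hom C X Y) \<and>
        (\<forall>f \<in> Hom C X Y. negm C f \<in> Hom C X Y) \<and>
        (\<forall>f \<in> Hom C X Y. \<forall>g \<in> Hom C X Y. \<forall>h \<in> Hom C X Y.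
            addm C (addm C f g) h = addm C f (addm C g h)) \<and>
        (\<forall>f \<in> Hom C X Y. \<forall>g \<in> Hom C X Y. addm C f g = addm C g f) \<and>
        (\<forall>f \<in> Hom C X Y. addm C (zerom C X Y) f = f) \<and>
        (\<forall>f \<in> Hom C X Y. addm C (negm C f) f = zerom C X Y)"
  using BB by blast
lemma zH: "zerom C X Y \<in> Hom C X Y"
  using BXY by (rule conjunct1)
lemma addH: "f \<in> Hom C X Y \<Longrightarrow> g \<in> Hom C X Y \<Longrightarrow> addm C f g \<in> Hom C X Y"
  using BXY[of X Y] by blast
lemma negH: "f \<in> Hom C X Y \<Longrightarrow> negm C f \<in> Hom C X Y"
  using BXY[of X Y] by blast
lemma add_assoc: "f \<in> Hom C X Y \<Longrightarrow> g \<in> Hom C X Y \<Longrightarrow> h \<in> Hom C X Y \<Longrightarrow>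
   addm C (addm C f g) h = addm C f (addm C g h)"
  using BXY[of X Y] by blast
lemma add_comm: "f \<in> Hom C X Y \<Longrightarrow> g \<in> Hom C X Y \<Longrightarrow> addm C f g = addm C g f"
  using BXY[of X Y] by blast
lemma zero_add: "f \<in> Hom C X Y \<Longrightarrow> addm C (zerom C X Y) f = f"
  using BXY[of X Y] by blast
lemma neg_add: "f \<in> Hom C X Y \<Longrightarrow> addm C (negm C f) f = zerom C X Y"
  using BXY[of X Y] by blast
lemma distL: "f \<in> Hom C X Y \<Longrightarrow> g \<in> Hom C Y Z \<Longrightarrow> g' \<in> Hom C Y Z \<Longrightarrow>
        cmp C (addm C g g') f = addm C (cmp C g f) (cmp C g' f)"
  using DL by blast
lemma distR: "f \<in> Hom C X Y \<Longrightarrow> f' \<in> Hom C X Y \<Longrightarrow> g \<in> Hom C Y Z \<Longrightarrow>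
        cmp C g (addm C f f') = addm C (cmp C g f) (cmp C g f')"
  using DR by blast

lemma add_zero: "f \<in> Hom C X Y \<Longrightarrow> addm C f (zerom C X Y) = f"
  by (subst add_comm, assumption, rule zH, rule zero_add)
lemma add_neg: "f \<in> Hom C X Y \<Longrightarrow> addm C f (negm C f) = zerom C X Y"
  by (subst add_comm, assumption, erule negH, erule neg_add)
lemma cancel: "a \<in> Hom C X Y \<Longrightarrow> b \<in> Hom C X Y \<Longrightarrow> c \<in> Hom C X Y \<Longrightarrow>
   addm C a b = addm C a c \<Longrightarrow> b = c"
proof -
  assume h: "a \<in> Hom C X Y" "b \<in> Hom C X Y" "c \<in> Hom C X Y" "addm C a b = addm C a c"
  have "b = addm C (addm C (negm C a) a) b" using h(1-3) by (simp add: neg_add zero_add)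
  also have "\<dots> = addm C (negm C a) (addm C a b)" using h(1-3) by (simp add: add_assoc[of "negm C a" X Y a b] negH)
  also have "\<dots> = addm C (negm C a) (addm C a c)" using h by simp
  also have "\<dots> = addm C (addm C (negm C a) a) c" using h(1-3) by (simp add: add_assoc[of "negm C a" X Y a c] negH)
  also have "\<dots> = c" using h by (simp add: neg_add zero_add)
  finally show ?thesis .
qed
lemma inv_unique: "a \<in> Hom C X Y \<Longrightarrow> b \<in> Hom C X Y \<Longrightarrow> x \<in> Hom C X Y \<Longrightarrow>
   addm C x a = zerom C X Y \<Longrightarrow> addm C x b = zerom C X Y \<Longrightarrow> a = b"
  using cancel[of x X Y a b] by simp
lemma neg_zero: "negm C (zerom C X Y) = zerom C X Y"
  using neg_add[OF zH] add_zero[OF negH[OF zH]] by simp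
lemma cmp_zero_r: "g \<in> Hom C Y Z \<Longrightarrow> cmp C g (zerom C X Y) = zerom C X Z"
proof -
  assume g: "g \<in> Hom C Y Z"
  have "cmp C g (zerom C X Y) = cmp C g (addm C (zerom C X Y) (zerom C X Y))"
    by (simp add: zero_add zH)
  also have "\<dots> = addm C (cmp C g (zerom C X Y)) (cmp C g (zerom C X Y))"
    using distR[OF zH zH g] .
  finally have "addm C (cmp C g (zerom C X Y)) (cmp C g (zerom C X Y)) =
      addm C (cmp C g (zerom C X Y)) (zerom C X Z)"
    using add_zero[OF cmpH[OF zH g]] by simp
  then show ?thesis using cancel[OF cmpH[OF zH g] cmpH[OF zH g] zH] by simp
qed
lemma cmp_zero_l: "f \<in> Hom C X Y \<Longrightarrow> cmp C (zerom C Y Z) f = zerom C X Z"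
proof -
  assume f: "f \<in> Hom C X Y"
  have "cmp C (zerom C Y Z) f = cmp C (addm C (zerom C Y Z) (zerom C Y Z)) f"
    by (simp add: zero_add zH)
  also have "\<dots> = addm C (cmp C (zerom C Y Z) f) (cmp C (zerom C Y Z) f)"
    using distL[OF f zH zH] .
  finally have "addm C (cmp C (zerom C Y Z) f) (cmp C (zerom C Y Z) f) =
      addm C (cmp C (zerom C Y Z) f) (zerom C X Z)"
    using add_zero[OF cmpH[OF f zH]] by simp
  then show ?thesis using cancel[OF cmpH[OF f zH] cmpH[OF f zH] zH] by simp
qed
lemma cmp_neg_r: "f \<in> Hom C X Y \<Longrightarrow> g \<in> Hom C Y Z \<Longrightarrow> cmp C g (negm C f) = negm C (cmp C g f)"
proof -
  assume f: "f \<in> Hom C X Y" and g: "g \<in> Hom C Y Z"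
  have "addm C (cmp C g f) (cmp C g (negm C f)) = zerom C X Z"
    using distR[OF f negH[OF f] g] add_neg[OF f] cmp_zero_r[OF g] by simp
  moreover have "addm C (cmp C g f) (negm C (cmp C g f)) = zerom C X Z"
    using add_neg[OF cmpH[OF f g]] .
  ultimately show ?thesis using inv_unique[OF cmpH[OF negH[OF f] g] negH[OF cmpH[OF f g]] cmpH[OF f g]] by simp
qed
lemma cmp_neg_l: "f \<in> Hom C X Y \<Longrightarrow> g \<in> Hom C Y Z \<Longrightarrow> cmp C (negm C g) f = negm C (cmp C g f)"
proof -
  assume f: "f \<in> Hom C X Y" and g: "g \<in> Hom C Y Z"
  have "addm C (cmp C g f) (cmp C (negm C g) f) = zerom C X Z"
    using distL[OF f g negH[OF g]] add_neg[OF g] cmp_zero_l[OF f] by simp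
  moreover have "addm C (cmp C g f) (negm C (cmp C g f)) = zerom C X Z"
    using add_neg[OF cmpH[OF f g]] .
  ultimately show ?thesis using inv_unique[OF cmpH[OF f negH[OF g]] negH[OF cmpH[OF f g]] cmpH[OF f g]] by simp
qed
lemma neg_neg: "f \<in> Hom C X Y \<Longrightarrow> negm C (negm C f) = f"
  using inv_unique[of "negm C (negm C f)" X Y f "negm C f"] negH[of f X Y] negH[of "negm C f" X Y] add_neg[of "negm C f" X Y] neg_add[of f X Y] by simp
lemma diff_cmp: "f \<in> Hom C X Y \<Longrightarrow> f' \<in> Hom C X Y \<Longrightarrow> g \<in> Hom C Y Z \<Longrightarrow>
  cmp C g (addm C f (negm C f')) = addm C (cmp C g f) (negm C (cmp C g f'))"
  using distR[of f X Y "negm C f'" g Z] negH[of f' X Y] cmp_neg_r[of f' X Y g Z] by simp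
lemma neg_diff: "f \<in> Hom C X Y \<Longrightarrow> g \<in> Hom C X Y \<Longrightarrow>
   negm C (addm C f (negm C g)) = addm C g (negm C f)"
proof -
  assume f: "f \<in> Hom C X Y" and g: "g \<in> Hom C X Y"
  have ng: "negm C g \<in> Hom C X Y" and nf: "negm C f \<in> Hom C X Y" using f g negH by auto
  have gnf: "addm C g (negm C f) \<in> Hom C X Y" using addH g nf by blast
  have "addm C (addm C f (negm C g)) (addm C g (negm C f)) =
        addm C f (addm C (negm C g) (addm C g (negm C f)))"
    using add_assoc[OF f ng gnf] .
  also have "addm C (negm C g) (addm C g (negm C f)) = addm C (addm C (negm C g) g) (negm C f)"
    using add_assoc[OF ng g nf] by simp
  also have "\<dots> = negm C f" using neg_add[OF g] zero_add[OF nf] by simp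
  finally have "addm C (addm C f (negm C g)) (addm C g (negm C f)) = zerom C X Y"
    using add_neg[OF f] by simp
  then show ?thesis
    using inv_unique[OF negH[OF addH[OF f ng]] gnf addH[OF f ng]] add_neg[OF addH[OF f ng]] by simp
qed
lemma diff_trans: "f \<in> Hom C X Y \<Longrightarrow> g \<in> Hom C X Y \<Longrightarrow> h \<in> Hom C X Y \<Longrightarrow>
   addm C (addm C f (negm C g)) (addm C g (negm C h)) = addm C f (negm C h)"
proof -
  assume f: "f \<in> Hom C X Y" and g: "g \<in> Hom C X Y" and h: "h \<in> Hom C X Y"
  have ng: "negm C g \<in> Hom C X Y" and nh: "negm C h \<in> Hom C X Y" using h g negH by auto
  have "addm C (addm C f (negm C g)) (addm C g (negm C h)) =
        addm C f (addm C (negm C g) (addm C g (negm C h)))"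
    using add_assoc[OF f ng addH[OF g nh]] .
  also have "addm C (negm C g) (addm C g (negm C h)) = addm C (addm C (negm C g) g) (negm C h)"
    using add_assoc[OF ng g nh] by simp
  also have "\<dots> = negm C h" using neg_add[OF g] zero_add[OF nh] by simp
  finally show ?thesis .
qed
lemma sub_add: "f \<in> Hom C X Y \<Longrightarrow> g \<in> Hom C X Y \<Longrightarrow>
   addm C (addm C f (negm C g)) g = f"
proof -
  assume f: "f \<in> Hom C X Y" and g: "g \<in> Hom C X Y"
  have ng: "negm C g \<in> Hom C X Y" using g negH by auto
  have "addm C (addm C f (negm C g)) g = addm C f (addm C (negm C g) g)"
    using add_assoc[OF f ng g] .
  also have "\<dots> = f" using neg_add[OF g] add_zero[OF f] by simp
  finally show ?thesis .
qed

end



context fixes C :: "('o,'m,'x) tricat_scheme" assumes TA: "triangle_axioms C"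
begin
lemmas TA' = TA[unfolded triangle_axioms_def]
lemma distH0: "dist C X Y Z f g h \<Longrightarrow> f \<in> Hom C X Y \<and> g \<in> Hom C Y Z \<and> h \<in> Hom C Z (shO C X)"
  using conjunct1[OF TA'] by blast
lemma rot0: "dist C X Y Z f g h \<longleftrightarrow> dist C Y Z (shO C X) g h (negm C (shM C f))"
  using conjunct1[OF conjunct2[OF conjunct2[OF conjunct2[OF conjunct2[OF TA']]]]] by blast
lemma tr30: "dist C X Y Z f g h \<Longrightarrow> dist C X' Y' Z' f' g' h' \<Longrightarrow>
        u \<in> Hom C X X' \<Longrightarrow> v \<in> Hom C Y Y' \<Longrightarrow> cmp C f' u = cmp C v f \<Longrightarrow>
        (\<exists>w \<in> Hom C Z Z'. cmp C g' v = cmp C w g \<and> cmp C h' w = cmp C (shM C u) h)"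
  using conjunct1[OF conjunct2[OF conjunct2[OF conjunct2[OF conjunct2[OF conjunct2[OF TA']]]]]] by blast
lemma trivial0: "\<exists>Z. zero_obj C Z \<and> dist C X X Z (idm C X) (zerom C X Z) (zerom C Z (shO C X))"
  using conjunct1[OF conjunct2[OF conjunct2[OF TA']]] by blast

end

context fixes C :: "('o,'m,'x) tricat_scheme" assumes T: "triangulated C"
begin

lemma P: "preadditive C" using T by (simp add: triangulated_def additive_def)
lemma SA: "shift_axioms C" using T by (simp add: triangulated_def)
lemma TA: "triangle_axioms C" using T by (simp add: triangulated_def)
lemmas distH = distH0[OF TA] and rot = rot0[OF TA] and tr3 = tr30[OF TA] and trivial = trivial0[OF TA]

lemma shM_H: "f \<in> Hom C X Y \<Longrightarrow> shM C f \<in> Hom C (shO C X) (shO C Y)"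
  using SA unfolding shift_axioms_def by (meson bij_betw_apply)
lemma shM_inj: "f \<in> Hom C X Y \<Longrightarrow> g \<in> Hom C X Y \<Longrightarrow> shM C f = shM C g \<Longrightarrow> f = g"
  using SA unfolding shift_axioms_def by (meson bij_betw_imp_inj_on inj_onD)
lemma shM_surj: "h \<in> Hom C (shO C X) (shO C Y) \<Longrightarrow> \<exists>f \<in> Hom C X Y. h = shM C f"
  using SA unfolding shift_axioms_def by (metis bij_betw_imp_surj_on imageE)
lemma shM_cmp: "f \<in> Hom C X Y \<Longrightarrow> g \<in> Hom C Y Z \<Longrightarrow> shM C (cmp C g f) = cmp C (shM C g) (shM C f)"
  using SA unfolding shift_axioms_def by blast
lemma shM_id: "shM C (idm C X) = idm C (shO C X)"
  using SA unfolding shift_axioms_def by blast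
lemma shM_add: "f \<in> Hom C X Y \<Longrightarrow> g \<in> Hom C X Y \<Longrightarrow> shM C (addm C f g) = addm C (shM C f) (shM C g)"
  using SA unfolding shift_axioms_def by blast
lemma shM_zero: "shM C (zerom C X Y) = zerom C (shO C X) (shO C Y)"
proof -
  have z: "shM C (zerom C X Y) \<in> Hom C (shO C X) (shO C Y)" using shM_H zH[OF P] by blast
  have "addm C (shM C (zerom C X Y)) (shM C (zerom C X Y)) = shM C (zerom C X Y)"
    using shM_add[OF zH[OF P] zH[OF P]] zero_add[OF P zH[OF P]] by simp
  also have "\<dots> = addm C (shM C (zerom C X Y)) (zerom C (shO C X) (shO C Y))"
    using add_zero[OF P z] by simp
  finally show ?thesis using cancel[OF P z z zH[OF P]] by blast
qed
lemma shO_inv: "shO C (shO_inv C A) = A"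
  using SA unfolding shift_axioms_def shO_inv_def by (meson bij_is_surj surj_f_inv_f)

lemma vanish: "shO C A = S' \<Longrightarrow> Hom C S' (shO C Y) = {zerom C S' (shO C Y)} \<Longrightarrow>
   t \<in> Hom C A Y \<Longrightarrow> t = zerom C A Y"
proof -
  assume a: "shO C A = S'" "Hom C S' (shO C Y) = {zerom C S' (shO C Y)}" "t \<in> Hom C A Y"
  have "shM C t = shM C (zerom C A Y)" using shM_H[OF a(3)] a(1,2) shM_zero by auto
  then show ?thesis using shM_inj a(3) zH[OF P] by blast
qed

lemma exact_left:
  assumes d: "dist C X Y Z f g h" and t: "t \<in> Hom C W Y" and z: "cmp C g t = zerom C W Z"
  shows "\<exists>s \<in> Hom C W X. t = cmp C f s"
proof -
  obtain Z0 where Z0: "dist C W W Z0 (idm C W) (zerom C W Z0) (zerom C Z0 (shO C W))"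
    using trivial by blast
  have d1: "dist C W Z0 (shO C W) (zerom C W Z0) (zerom C Z0 (shO C W)) (negm C (shM C (idm C W)))"
    using Z0 rot by blast
  have d2: "dist C Y Z (shO C X) g h (negm C (shM C f))" using d rot by blast
  have H: "f \<in> Hom C X Y" "g \<in> Hom C Y Z" "h \<in> Hom C Z (shO C X)" using distH[OF d] by auto
  have "cmp C g t = cmp C (zerom C Z0 Z) (zerom C W Z0)"
    using z cmp_zero_l[OF P zH[OF P]] by simp
  then obtain w where w: "w \<in> Hom C (shO C W) (shO C X)"
     "cmp C (negm C (shM C f)) w = cmp C (shM C t) (negm C (shM C (idm C W)))"
    using tr3[OF d1 d2 t zH[OF P]] by metis
  have ft: "shM C f \<in> Hom C (shO C X) (shO C Y)" "shM C t \<in> Hom C (shO C W) (shO C Y)"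
    using shM_H H t by auto
  have "negm C (cmp C (shM C f) w) = negm C (shM C t)"
    using w(2) cmp_neg_l[OF P w(1) ft(1)] cmp_neg_r[OF P idH[OF P] ft(2)] shM_id idr[OF P ft(2)]
    by simp
  then have e: "cmp C (shM C f) w = shM C t"
    using neg_neg[OF P cmpH[OF P w(1) ft(1)]] neg_neg[OF P ft(2)] by metis
  obtain s where s: "s \<in> Hom C W X" "w = shM C s" using shM_surj[OF w(1)] by blast
  have "shM C (cmp C f s) = shM C t" using e s shM_cmp H by simp
  then have "cmp C f s = t" using shM_inj cmpH[OF P s(1) H(1)] t by blast
  then show ?thesis using s by blast
qed

lemma exact_right:
  assumes d: "dist C X Y Z f g h" and t: "t \<in> Hom C Y W" and z: "cmp C t f = zerom C X W"
  shows "\<exists>s \<in> Hom C Z W. t = cmp C s g"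
proof -
  obtain Z0 where Z0: "dist C W W Z0 (idm C W) (zerom C W Z0) (zerom C Z0 (shO C W))"
    using trivial by blast
  define A where "A = shO_inv C Z0"
  have sA: "shO C A = Z0" using shO_inv A_def by simp
  have "negm C (shM C (zerom C A W)) = zerom C Z0 (shO C W)"
    using shM_zero sA neg_zero[OF P] by simp
  then have "dist C W W (shO C A) (idm C W) (zerom C W Z0) (negm C (shM C (zerom C A W)))"
    using Z0 sA by simp
  then have d2: "dist C A W W (zerom C A W) (idm C W) (zerom C W Z0)" using rot by blast
  have H: "f \<in> Hom C X Y" "g \<in> Hom C Y Z" "h \<in> Hom C Z (shO C X)" using distH[OF d] by auto
  have "cmp C (zerom C A W) (zerom C X A) = cmp C t f"
    using z cmp_zero_l[OF P zH[OF P]] by simp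
  then obtain w where w: "w \<in> Hom C Z W" "cmp C (idm C W) t = cmp C w g"
    using tr3[OF d d2 zH[OF P] t] by metis
  then show ?thesis using idl[OF P t] by auto
qed

end



context fixes C :: "('o,'m,'x) tricat_scheme" and W :: "'o set"
  assumes T: "triangulated C"
  and Wz: "\<exists>Z0 \<in> W. zero_obj C Z0"
  and Wb: "\<And>X1 X2 Y i1 i2 p1 p2. biprod C X1 X2 Y i1 i2 p1 p2 \<Longrightarrow> X1 \<in> W \<Longrightarrow> X2 \<in> W \<Longrightarrow> Y \<in> W"
begin

lemma PP: "preadditive C" using P[OF T] .

lemma ft_zero: "factors_through C W X Y (zerom C X Y)"
proof -
  obtain Z0 where "Z0 \<in> W" using Wz by blast
  then show ?thesis unfolding factors_through_def
    using zH[OF PP, of X Z0] zH[OF PP, of Z0 Y] cmp_zero_l[OF PP zH[OF PP, of X Z0], of Y] by (intro bexI[of _ Z0] bexI[of _ "zerom C X Z0"] bexI[of _ "zerom C Z0 Y"]) auto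
qed

lemma ft_neg: "factors_through C W X Y f \<Longrightarrow> factors_through C W X Y (negm C f)"
proof -
  assume "factors_through C W X Y f"
  then obtain Z u v where 1: "Z \<in> W" "u \<in> Hom C X Z" "v \<in> Hom C Z Y" "f = cmp C v u"
    unfolding factors_through_def by blast
  then have "negm C f = cmp C (negm C v) u" using cmp_neg_l[OF PP 1(2) 1(3)] by simp
  then show ?thesis unfolding factors_through_def using 1 negH[OF PP 1(3)] by blast
qed

lemma ft_post: "factors_through C W X Y f \<Longrightarrow> k \<in> Hom C Y Z \<Longrightarrow> factors_through C W X Z (cmp C k f)"
proof -
  assume "factors_through C W X Y f" and k: "k \<in> Hom C Y Z"
  then obtain Z' u v where 1: "Z' \<in> W" "u \<in> Hom C X Z'" "v \<in> Hom C Z' Y" "f = cmp C v u"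
    unfolding factors_through_def by blast
  then have "cmp C k f = cmp C (cmp C k v) u" using assoc[OF PP 1(2) 1(3) k] by simp
  then show ?thesis unfolding factors_through_def using 1 cmpH[OF PP 1(3) k] by blast
qed



lemma ft_add:
  assumes f: "factors_through C W X Y f" and g: "factors_through C W X Y g"
  shows "factors_through C W X Y (addm C f g)"
proof -
  obtain Z1 u1 v1 where 1: "Z1 \<in> W" "u1 \<in> Hom C X Z1" "v1 \<in> Hom C Z1 Y" "f = cmp C v1 u1"
    using f unfolding factors_through_def by blast
  obtain Z2 u2 v2 where 2: "Z2 \<in> W" "u2 \<in> Hom C X Z2" "v2 \<in> Hom C Z2 Y" "g = cmp C v2 u2"
    using g unfolding factors_through_def by blast
  obtain B i1 i2 p1 p2 where b: "biprod C Z1 Z2 B i1 i2 p1 p2"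
    using T unfolding triangulated_def additive_def by blast
  have BW: "B \<in> W" using Wb[OF b 1(1) 2(1)] .
  have bb: "i1 \<in> Hom C Z1 B" "i2 \<in> Hom C Z2 B" "p1 \<in> Hom C B Z1" "p2 \<in> Hom C B Z2"
     "cmp C p1 i1 = idm C Z1" "cmp C p2 i2 = idm C Z2"
     "cmp C p1 i2 = zerom C Z2 Z1" "cmp C p2 i1 = zerom C Z1 Z2"
    using b unfolding biprod_def by auto
  define u where "u = addm C (cmp C i1 u1) (cmp C i2 u2)"
  define v where "v = addm C (cmp C v1 p1) (cmp C v2 p2)"
  have uH: "u \<in> Hom C X B" unfolding u_def
    using addH[OF PP cmpH[OF PP 1(2) bb(1)] cmpH[OF PP 2(2) bb(2)]] .
  have vH: "v \<in> Hom C B Y" unfolding v_def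
    using addH[OF PP cmpH[OF PP bb(3) 1(3)] cmpH[OF PP bb(4) 2(3)]] .
  have vi1: "cmp C v i1 = v1"
  proof -
    have "cmp C v i1 = addm C (cmp C (cmp C v1 p1) i1) (cmp C (cmp C v2 p2) i1)"
      unfolding v_def using distL[OF PP bb(1) cmpH[OF PP bb(3) 1(3)] cmpH[OF PP bb(4) 2(3)]] .
    also have "\<dots> = addm C (cmp C v1 (cmp C p1 i1)) (cmp C v2 (cmp C p2 i1))"
      using assoc[OF PP bb(1) bb(3) 1(3)] assoc[OF PP bb(1) bb(4) 2(3)] by simp
    also have "\<dots> = addm C v1 (zerom C Z1 Y)"
      using bb idr[OF PP 1(3)] cmp_zero_r[OF PP 2(3)] by simp
    also have "\<dots> = v1" using add_zero[OF PP 1(3)] .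
    finally show ?thesis .
  qed
  have vi2: "cmp C v i2 = v2"
  proof -
    have "cmp C v i2 = addm C (cmp C (cmp C v1 p1) i2) (cmp C (cmp C v2 p2) i2)"
      unfolding v_def using distL[OF PP bb(2) cmpH[OF PP bb(3) 1(3)] cmpH[OF PP bb(4) 2(3)]] .
    also have "\<dots> = addm C (cmp C v1 (cmp C p1 i2)) (cmp C v2 (cmp C p2 i2))"
      using assoc[OF PP bb(2) bb(3) 1(3)] assoc[OF PP bb(2) bb(4) 2(3)] by simp
    also have "\<dots> = addm C (zerom C Z2 Y) v2"
      using bb idr[OF PP 2(3)] cmp_zero_r[OF PP 1(3)] by simp
    also have "\<dots> = v2" using zero_add[OF PP 2(3)] .
    finally show ?thesis .
  qed
  have "cmp C v u = addm C (cmp C v (cmp C i1 u1)) (cmp C v (cmp C i2 u2))"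
    unfolding u_def using distR[OF PP cmpH[OF PP 1(2) bb(1)] cmpH[OF PP 2(2) bb(2)] vH] .
  also have "\<dots> = addm C (cmp C (cmp C v i1) u1) (cmp C (cmp C v i2) u2)"
    using assoc[OF PP 1(2) bb(1) vH] assoc[OF PP 2(2) bb(2) vH] by simp
  also have "\<dots> = addm C f g" using vi1 vi2 1 2 by simp
  finally have "addm C f g = cmp C v u" by simp
  then show ?thesis unfolding factors_through_def using BW uH vH by blast
qed

lemma rel_equiv: "equiv (Hom C X Y) (stable_rel C W X Y)"
proof (rule equivI)
  show "stable_rel C W X Y \<subseteq> Hom C X Y \<times> Hom C X Y" unfolding stable_rel_def by auto
  show "refl_on (Hom C X Y) (stable_rel C W X Y)"
    unfolding stable_rel_def refl_on_def using add_neg[OF PP] ft_zero by auto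
  show "sym (stable_rel C W X Y)"
    unfolding stable_rel_def sym_def using ft_neg neg_diff[OF PP] by fastforce
  show "trans (stable_rel C W X Y)"
    unfolding stable_rel_def trans_def using ft_add diff_trans[OF PP] by fastforce
qed

lemma pc_class:
  assumes k: "k \<in> Hom C K c" and h: "h \<in> Hom C X K"
  shows "postcomp_class C W X c k (stable_rel C W X K `` {h}) = stable_rel C W X c `` {cmp C k h}"
proof
  show "postcomp_class C W X c k (stable_rel C W X K `` {h}) \<subseteq> stable_rel C W X c `` {cmp C k h}"
  proof
    fix y assume "y \<in> postcomp_class C W X c k (stable_rel C W X K `` {h})"
    then obtain h' where h': "(h, h') \<in> stable_rel C W X K" "(cmp C k h', y) \<in> stable_rel C W X c"
      unfolding postcomp_class_def by blast
    have hh: "h' \<in> Hom C X K" "factors_through C W X K (addm C h (negm C h'))"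
      using h' unfolding stable_rel_def by auto
    have "factors_through C W X c (cmp C k (addm C h (negm C h')))" using ft_post hh k by blast
    then have "(cmp C k h, cmp C k h') \<in> stable_rel C W X c"
      unfolding stable_rel_def using diff_cmp[OF PP h hh(1) k] cmpH[OF PP] h hh k by auto
    then show "y \<in> stable_rel C W X c `` {cmp C k h}"
      using h'(2) rel_equiv unfolding equiv_def trans_def by blast
  qed
  show "stable_rel C W X c `` {cmp C k h} \<subseteq> postcomp_class C W X c k (stable_rel C W X K `` {h})"
    unfolding postcomp_class_def using equiv_class_self[OF rel_equiv h] by blast
qed

lemma main_bij:
  assumes k: "k \<in> Hom C K c"
  and surj0: "\<And>h. h \<in> Hom C X c \<Longrightarrow> \<exists>h' \<in> Hom C X K. h = cmp C k h'"
  and inj0: "\<And>d. d \<in> Hom C X K \<Longrightarrow> factors_through C W X c (cmp C k d) \<Longrightarrow> factors_through C W X K d"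
  shows "bij_betw (postcomp_class C W X c k) (quot_hom C W X K) (quot_hom C W X c)"
  unfolding bij_betw_def
proof
  show "inj_on (postcomp_class C W X c k) (quot_hom C W X K)"
  proof (rule inj_onI)
    fix A B assume A: "A \<in> quot_hom C W X K" and B: "B \<in> quot_hom C W X K"
      and e: "postcomp_class C W X c k A = postcomp_class C W X c k B"
    obtain x where x: "A = stable_rel C W X K `` {x}" "x \<in> Hom C X K"
      using A unfolding quot_hom_def by (rule quotientE)
    obtain y where y: "B = stable_rel C W X K `` {y}" "y \<in> Hom C X K"
      using B unfolding quot_hom_def by (rule quotientE)
    have "stable_rel C W X c `` {cmp C k x} = stable_rel C W X c `` {cmp C k y}"
      using e x y pc_class k by simp
    then have "(cmp C k x, cmp C k y) \<in> stable_rel C W X c"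
      using eq_equiv_class_iff[OF rel_equiv] cmpH[OF PP] k x y by blast
    then have "factors_through C W X c (cmp C k (addm C x (negm C y)))"
      unfolding stable_rel_def using diff_cmp[OF PP x(2) y(2) k] by simp
    then have "factors_through C W X K (addm C x (negm C y))"
      using inj0 addH[OF PP] negH[OF PP] x y by blast
    then have "(x, y) \<in> stable_rel C W X K" unfolding stable_rel_def using x y by simp
    then show "A = B" using x y eq_equiv_class_iff[OF rel_equiv] by blast
  qed
  show "postcomp_class C W X c k ` quot_hom C W X K = quot_hom C W X c"
  proof
    show "postcomp_class C W X c k ` quot_hom C W X K \<subseteq> quot_hom C W X c"
    proof
      fix Q assume "Q \<in> postcomp_class C W X c k ` quot_hom C W X K"
      then obtain A where A: "A \<in> quot_hom C W X K" "Q = postcomp_class C W X c k A" by blast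
      obtain x where x: "A = stable_rel C W X K `` {x}" "x \<in> Hom C X K"
        using A(1) unfolding quot_hom_def by (rule quotientE)
      show "Q \<in> quot_hom C W X c" using A(2) x pc_class k cmpH[OF PP]
        unfolding quot_hom_def by (metis quotientI)
    qed
    show "quot_hom C W X c \<subseteq> postcomp_class C W X c k ` quot_hom C W X K"
    proof
      fix Q assume "Q \<in> quot_hom C W X c"
      then obtain x where x: "Q = stable_rel C W X c `` {x}" "x \<in> Hom C X c"
        unfolding quot_hom_def by (rule quotientE)
      obtain h' where h': "h' \<in> Hom C X K" "x = cmp C k h'" using surj0 x(2) by blast
      have "Q = postcomp_class C W X c k (stable_rel C W X K `` {h'})"
        using pc_class[OF k h'(1)] x h' by simp
      moreover have "stable_rel C W X K `` {h'} \<in> quot_hom C W X K"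
        unfolding quot_hom_def using h'(1) by (rule quotientI)
      ultimately show "Q \<in> postcomp_class C W X c k ` quot_hom C W X K" by blast
    qed
  qed
qed

end



theorem proposition3p5:
  fixes C :: "('o, 'm) tricat"
    and S T U V :: "'o set"
    and c Sob Tob Uob Vob K X :: 'o
    and f a g p b q i k :: 'm
  assumes tri: "triangulated C"
    and twin: "twin_cotorsion_pair C S T U V"
    and Sob: "Sob \<in> S" and Tob: "Tob \<in> T"
    and tr1: "dist C (shO_inv C Sob) c Tob f a g"
    and Uob: "Uob \<in> U" and Vob: "Vob \<in> V"
    and tr2: "dist C Uob Tob (shO C Vob) p b q"
    and tr3: "dist C Vob K c i k (cmp C b a)"
    and X: "X \<in> Cminus C S T U"
  shows "bij_betw (postcomp_class C (T \<inter> U) X c k)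
                  (quot_hom C (T \<inter> U) X K) (quot_hom C (T \<inter> U) X c)"
proof -
  have PP: "preadditive C" using P[OF tri] .
  have cpST: "cotorsion_pair C S T" and cpUV: "cotorsion_pair C U V"
    and eSV: "ext1_vanish C S V" using twin unfolding twin_cotorsion_pair_def by auto
  have sT: "subcat C T" and sU: "subcat C U" and eST: "ext1_vanish C S T" and eUV: "ext1_vanish C U V"
    using cpST cpUV unfolding cotorsion_pair_def by auto
  have Wz: "\<exists>Z0 \<in> T \<inter> U. zero_obj C Z0"
  proof -
    obtain Z1 where Z1: "zero_obj C Z1" "Z1 \<in> T" using sT unfolding subcat_def by blast
    obtain Z2 where Z2: "zero_obj C Z2" "Z2 \<in> U" using sU unfolding subcat_def by blast
    have "cmp C (zerom C Z1 Z2) (zerom C Z2 Z1) = idm C Z2"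
      using Z2(1) cmpH[OF PP zH[OF PP, of Z2 Z1] zH[OF PP, of Z1 Z2]] idH[OF PP, of Z2] unfolding zero_obj_def by auto
    moreover have "cmp C (zerom C Z2 Z1) (zerom C Z1 Z2) = idm C Z1"
      using Z1(1) cmpH[OF PP zH[OF PP, of Z1 Z2] zH[OF PP, of Z2 Z1]] idH[OF PP, of Z1] unfolding zero_obj_def by auto
    ultimately have "iso C (zerom C Z2 Z1) Z2 Z1" unfolding iso_def using zH[OF PP] by blast
    then have "Z1 \<in> U" using sU Z2(2) unfolding subcat_def by blast
    then show ?thesis using Z1 by blast
  qed
  have Wb: "\<And>X1 X2 Y i1 i2 p1 p2. biprod C X1 X2 Y i1 i2 p1 p2 \<Longrightarrow> X1 \<in> T \<inter> U \<Longrightarrow> X2 \<in> T \<inter> U \<Longrightarrow> Y \<in> T \<inter> U"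
  proof -
    fix X1 X2 Y i1 i2 p1 p2 assume bp: "biprod C X1 X2 Y i1 i2 p1 p2" and x1: "X1 \<in> T \<inter> U" and x2: "X2 \<in> T \<inter> U"
    have cT: "\<forall>X1 X2 Y i1 i2 p1 p2. biprod C X1 X2 Y i1 i2 p1 p2 \<longrightarrow> X1 \<in> T \<longrightarrow> X2 \<in> T \<longrightarrow> Y \<in> T"
      using sT unfolding subcat_def by (elim conjE)
    have cU: "\<forall>X1 X2 Y i1 i2 p1 p2. biprod C X1 X2 Y i1 i2 p1 p2 \<longrightarrow> X1 \<in> U \<longrightarrow> X2 \<in> U \<longrightarrow> Y \<in> U"
      using sU unfolding subcat_def by (elim conjE)
    show "Y \<in> T \<inter> U" using cT[rule_format, OF bp] cU[rule_format, OF bp] x1 x2 by blast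
  qed
  obtain A B f0 g0 h0 where A: "A \<in> shO_inv C ` S" and B: "B \<in> T \<inter> U"
     and dX: "dist C A X B f0 g0 h0"
    using X unfolding Cminus_def star_def by blast
  obtain S' where S': "S' \<in> S" "A = shO_inv C S'" using A by blast
  have sA: "shO C A = S'" using S' shO_inv[OF tri] by simp
  have HX: "f0 \<in> Hom C A X" "g0 \<in> Hom C X B" using distH[OF tri dX] by auto
  have Ha: "a \<in> Hom C c Tob" using distH[OF tri tr1] by auto
  have Hb: "b \<in> Hom C Tob (shO C Vob)" using distH[OF tri tr2] by auto
  have Hik: "i \<in> Hom C Vob K" "k \<in> Hom C K c" using distH[OF tri tr3] by auto
  have Hba: "cmp C b a \<in> Hom C c (shO C Vob)" using cmpH[OF PP Ha Hb] .
  have r3: "dist C K c (shO C Vob) k (cmp C b a) (negm C (shM C i))" using tr3 rot[OF tri] by blast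
  have surj0: "\<And>h. h \<in> Hom C X c \<Longrightarrow> \<exists>h' \<in> Hom C X K. h = cmp C k h'"
  proof -
    fix h assume h: "h \<in> Hom C X c"
    have ah: "cmp C a h \<in> Hom C X Tob" using cmpH[OF PP h Ha] .
    have "cmp C (cmp C a h) f0 = zerom C A Tob"
      using vanish[OF tri sA _ cmpH[OF PP HX(1) ah]] eST S'(1) Tob unfolding ext1_vanish_def by blast
    then obtain s where s: "s \<in> Hom C B Tob" "cmp C a h = cmp C s g0"
      using exact_right[OF tri dX ah] by blast
    have bs: "cmp C b s = zerom C B (shO C Vob)"
      using cmpH[OF PP s(1) Hb] eUV B Vob unfolding ext1_vanish_def by blast
    have "cmp C (cmp C b a) h = cmp C b (cmp C a h)" using assoc[OF PP h Ha Hb] by simp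
    also have "\<dots> = cmp C (cmp C b s) g0" using s assoc[OF PP HX(2) s(1) Hb] by simp
    also have "\<dots> = zerom C X (shO C Vob)" using bs cmp_zero_l[OF PP HX(2)] by simp
    finally show "\<exists>h' \<in> Hom C X K. h = cmp C k h'" using exact_left[OF tri r3 h] by blast
  qed
  have inj0: "\<And>d. d \<in> Hom C X K \<Longrightarrow> factors_through C (T \<inter> U) X c (cmp C k d) \<Longrightarrow>
      factors_through C (T \<inter> U) X K d"
  proof -
    fix d assume d: "d \<in> Hom C X K" and fd: "factors_through C (T \<inter> U) X c (cmp C k d)"
    obtain W1 u v where W1: "W1 \<in> T \<inter> U" "u \<in> Hom C X W1" "v \<in> Hom C W1 c" "cmp C k d = cmp C v u"
      using fd unfolding factors_through_def by blast
    have "cmp C (cmp C b a) v = zerom C W1 (shO C Vob)"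
      using cmpH[OF PP W1(3) Hba] eUV W1(1) Vob unfolding ext1_vanish_def by blast
    then obtain v' where v': "v' \<in> Hom C W1 K" "v = cmp C k v'"
      using exact_left[OF tri r3 W1(3)] by blast
    have vu: "cmp C v' u \<in> Hom C X K" using cmpH[OF PP W1(2) v'(1)] .
    have kvu: "cmp C k (cmp C v' u) = cmp C k d" using W1(4) v' assoc[OF PP W1(2) v'(1) Hik(2)] by simp
    define e where "e = addm C d (negm C (cmp C v' u))"
    have eH: "e \<in> Hom C X K" unfolding e_def using addH[OF PP d negH[OF PP vu]] .
    have "cmp C k e = zerom C X c"
      unfolding e_def using diff_cmp[OF PP d vu Hik(2)] kvu add_neg[OF PP cmpH[OF PP d Hik(2)]] by simp
    then obtain t where t: "t \<in> Hom C X Vob" "e = cmp C i t"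
      using exact_left[OF tri tr3 eH] by blast
    have "cmp C t f0 = zerom C A Vob"
      using vanish[OF tri sA _ cmpH[OF PP HX(1) t(1)]] eSV S'(1) Vob unfolding ext1_vanish_def by blast
    then obtain t' where t': "t' \<in> Hom C B Vob" "t = cmp C t' g0"
      using exact_right[OF tri dX t(1)] by blast
    have "e = cmp C (cmp C i t') g0" using t t' assoc[OF PP HX(2) t'(1) Hik(1)] by simp
    then have fe: "factors_through C (T \<inter> U) X K e"
      unfolding factors_through_def using B HX(2) cmpH[OF PP t'(1) Hik(1)] by blast
    have fvu: "factors_through C (T \<inter> U) X K (cmp C v' u)"
      unfolding factors_through_def using W1 v' by blast
    have "d = addm C e (cmp C v' u)" unfolding e_def using sub_add[OF PP d vu] by simp
    then show "factors_through C (T \<inter> U) X K d" using ft_add[OF tri Wz Wb fe fvu] by simp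
  qed
  show ?thesis using main_bij[OF tri Wz Wb Hik(2) surj0 inj0] .
qed


end
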